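(* For all $m,n\in\mathbb N^+$, the ideal $\langle X^m,Y^n\rangle$ is an atom of $\mathrm{Mon}(R)$.
   Context: Let $K$ be a field, $N\ge2$, $R=K[X_1,\dots,X_N]$, $X=X_1$, $Y=X_2$. $\mathrm{Mon}(R)$ is the monoid of nonzero monomial ideals of $R$ under ideal multiplication, with identity $R$ (its only unit); an atom of $\mathrm{Mon}(R)$ is an $I\ne R$ in $\mathrm{Mon}(R)$ not a product of two elements of $\mathrm{Mon}(R)\setminus\{R\}$. *)

theory Defs
  imports "HOL-Library.Poly_Mapping"
begin

text \<open>Polynomials in countably many variables X_0, X_1, ... over K, as finitely supported
  maps from monomials (exponent vectors) to coefficients. Variable X_{i+1}
  of the paper is index i here.\<close>

type_synonym 'k mpoly = "(nat \<Rightarrow>\<^sub>0 nat) \<Rightarrow>\<^sub>0 'k"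

definition polyR :: "nat \<Rightarrow> 'k::field mpoly set" where
  "polyR N = {p. \<forall>e \<in> Poly_Mapping.keys p. Poly_Mapping.keys e \<subseteq> {..<N}}"

definition monomial :: "(nat \<Rightarrow>\<^sub>0 nat) \<Rightarrow> 'k::field mpoly" where
  "monomial e = Poly_Mapping.single e 1"

definition var :: "nat \<Rightarrow> 'k::field mpoly" where
  "var i = monomial (Poly_Mapping.single i 1)"

definition monomials :: "nat \<Rightarrow> 'k::field mpoly set" where
  "monomials N = {monomial e | e. Poly_Mapping.keys e \<subseteq> {..<N}}"

definition is_ideal :: "nat \<Rightarrow> 'k::field mpoly set \<Rightarrow> bool" where
  "is_ideal N I \<longleftrightarrow> I \<subseteq> polyR N \<and> 0 \<in> I \<and> (\<forall>f\<in>I. \<forall>g\<in>I. f + g \<in> I)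
     \<and> (\<forall>r\<in>polyR N. \<forall>f\<in>I. r * f \<in> I)"

definition ideal_gen :: "nat \<Rightarrow> 'k::field mpoly set \<Rightarrow> 'k mpoly set" where
  "ideal_gen N S = \<Inter>{I. is_ideal N I \<and> S \<subseteq> I}"

definition Mon :: "nat \<Rightarrow> 'k::field mpoly set set" where
  "Mon N = {I. \<exists>S \<subseteq> monomials N. I = ideal_gen N S \<and> I \<noteq> {0}}"

definition ideal_mult :: "nat \<Rightarrow> 'k::field mpoly set \<Rightarrow> 'k mpoly set \<Rightarrow> 'k mpoly set" where
  "ideal_mult N I J = ideal_gen N {f * g | f g. f \<in> I \<and> g \<in> J}"

definition is_atom_Mon :: "nat \<Rightarrow> 'k::field mpoly set \<Rightarrow> bool" where
  "is_atom_Mon N I \<longleftrightarrow> I \<in> Mon N \<and> I \<noteq> polyR N \<and>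
     \<not> (\<exists>A \<in> Mon N - {polyR N}. \<exists>B \<in> Mon N - {polyR N}. I = ideal_mult N A B)"

end

theory Submission
  imports Defs
begin

definition dle :: "(nat \<Rightarrow>\<^sub>0 nat) \<Rightarrow> (nat \<Rightarrow>\<^sub>0 nat) \<Rightarrow> bool" where
  "dle s e \<longleftrightarrow> (\<forall>i. Poly_Mapping.lookup s i \<le> Poly_Mapping.lookup e i)"

definition D :: "nat \<Rightarrow> (nat \<Rightarrow>\<^sub>0 nat) set \<Rightarrow> 'k::field mpoly set" where
  "D N E = {p \<in> polyR N. \<forall>e\<in>Poly_Mapping.keys p. \<exists>s\<in>E. dle s e}"

lemma keys_add_nat: "Poly_Mapping.keys ((a::nat \<Rightarrow>\<^sub>0 nat) + b) \<subseteq> Poly_Mapping.keys a \<union> Poly_Mapping.keys b"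
  by (rule keys_add)

lemma polyR_memI: "(\<And>e. e \<in> Poly_Mapping.keys p \<Longrightarrow> Poly_Mapping.keys e \<subseteq> {..<N}) \<Longrightarrow> p \<in> polyR N"
  unfolding polyR_def by blast

lemma polyR_memD: "p \<in> polyR N \<Longrightarrow> e \<in> Poly_Mapping.keys p \<Longrightarrow> Poly_Mapping.keys e \<subseteq> {..<N}"
  unfolding polyR_def by blast

lemma polyR_add: "f \<in> polyR N \<Longrightarrow> g \<in> polyR N \<Longrightarrow> (f + g :: 'k::field mpoly) \<in> polyR N"
proof (rule polyR_memI)
  fix e assume f: "f \<in> polyR N" and g: "g \<in> polyR N" and e: "e \<in> Poly_Mapping.keys (f + g)"
  have "e \<in> Poly_Mapping.keys f \<or> e \<in> Poly_Mapping.keys g" using keys_add[of f g] e by blast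
  then show "Poly_Mapping.keys e \<subseteq> {..<N}" using polyR_memD f g by blast
qed

lemma polyR_mult: "f \<in> polyR N \<Longrightarrow> g \<in> polyR N \<Longrightarrow> (f * g :: 'k::field mpoly) \<in> polyR N"
proof (rule polyR_memI)
  fix e assume f: "f \<in> polyR N" and g: "g \<in> polyR N" and e: "e \<in> Poly_Mapping.keys (f * g)"
  obtain a b where ab: "e = a + b" "a \<in> Poly_Mapping.keys f" "b \<in> Poly_Mapping.keys g"
    using keys_mult[of f g] e by blast
  have "Poly_Mapping.keys e \<subseteq> Poly_Mapping.keys a \<union> Poly_Mapping.keys b"
    unfolding ab(1) by (rule keys_add)
  moreover have "Poly_Mapping.keys a \<subseteq> {..<N}" using polyR_memD[OF f ab(2)] .
  moreover have "Poly_Mapping.keys b \<subseteq> {..<N}" using polyR_memD[OF g ab(3)] .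
  ultimately show "Poly_Mapping.keys e \<subseteq> {..<N}" by blast
qed

lemma is_ideal_polyR: "is_ideal N (polyR N :: 'k::field mpoly set)"
proof -
  have "(0 :: 'k mpoly) \<in> polyR N" unfolding polyR_def by simp
  then show ?thesis unfolding is_ideal_def using polyR_add polyR_mult by blast
qed

lemma ideal_gen_least: "is_ideal N I \<Longrightarrow> S \<subseteq> I \<Longrightarrow> ideal_gen N S \<subseteq> I"
  unfolding ideal_gen_def by blast

lemma ideal_gen_sup: "S \<subseteq> ideal_gen N S"
  unfolding ideal_gen_def by blast

lemma is_idealI: "I \<subseteq> polyR N \<Longrightarrow> 0 \<in> I \<Longrightarrow> (\<forall>f\<in>I. \<forall>g\<in>I. f + g \<in> I)
     \<Longrightarrow> (\<forall>r\<in>polyR N. \<forall>f\<in>I. r * f \<in> I) \<Longrightarrow> is_ideal N I"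
  unfolding is_ideal_def by blast

lemma ideal_gen_ideal: assumes "(S :: 'k::field mpoly set) \<subseteq> polyR N" shows "is_ideal N (ideal_gen N S)"
proof -
  let ?F = "{I. is_ideal N I \<and> S \<subseteq> I}"
  have ne: "polyR N \<in> ?F" using assms is_ideal_polyR by blast
  have G: "ideal_gen N S = \<Inter> ?F" unfolding ideal_gen_def by simp
  have 1: "\<Inter> ?F \<subseteq> polyR N" using ne by blast
  have 2: "0 \<in> \<Inter> ?F" unfolding is_ideal_def by blast
  have 3: "\<forall>f\<in>\<Inter> ?F. \<forall>g\<in>\<Inter> ?F. f + g \<in> \<Inter> ?F"
  proof (intro ballI)
    fix f g :: "'k mpoly" assume f: "f \<in> \<Inter> ?F" and g: "g \<in> \<Inter> ?F"
    show "f + g \<in> \<Inter> ?F"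
    proof
      fix I assume I: "I \<in> ?F"
      then have "f \<in> I" "g \<in> I" "is_ideal N I" using f g by blast+
      then show "f + g \<in> I" unfolding is_ideal_def by blast
    qed
  qed
  have 4: "\<forall>r\<in>polyR N. \<forall>f\<in>\<Inter> ?F. r * f \<in> \<Inter> ?F"
  proof (intro ballI)
    fix r f :: "'k mpoly" assume r: "r \<in> polyR N" and f: "f \<in> \<Inter> ?F"
    show "r * f \<in> \<Inter> ?F"
    proof
      fix I assume I: "I \<in> ?F"
      then have "f \<in> I" "is_ideal N I" using f by blast+
      then show "r * f \<in> I" using r unfolding is_ideal_def by blast
    qed
  qed
  show ?thesis unfolding G using 1 2 3 4 by (rule is_idealI)
qed

lemma dle_add: "dle s e \<Longrightarrow> dle t f \<Longrightarrow> dle (s + t) (e + f)"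
  unfolding dle_def by (simp add: lookup_add add_mono)

lemma dle_add2: "dle s f \<Longrightarrow> dle s (e + f)"
  unfolding dle_def by (simp add: lookup_add add_increasing)

lemma D_memI: "p \<in> polyR N \<Longrightarrow> (\<And>e. e \<in> Poly_Mapping.keys p \<Longrightarrow> \<exists>s\<in>E. dle s e) \<Longrightarrow> p \<in> D N E"
  unfolding D_def by blast

lemma D_memD: "p \<in> D N E \<Longrightarrow> e \<in> Poly_Mapping.keys p \<Longrightarrow> \<exists>s\<in>E. dle s e"
  unfolding D_def by blast

lemma D_polyR: "p \<in> D N E \<Longrightarrow> p \<in> polyR N"
  unfolding D_def by blast

lemma D_ideal: "is_ideal N (D N E :: 'k::field mpoly set)"
proof -
  have 1: "D N E \<subseteq> polyR N" unfolding D_def by blast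
  have 2: "0 \<in> (D N E :: 'k mpoly set)" unfolding D_def polyR_def by simp
  have 3: "\<forall>f\<in>D N E. \<forall>g\<in>D N E. f + g \<in> (D N E :: 'k mpoly set)"
  proof (intro ballI)
    fix f g :: "'k mpoly" assume f: "f \<in> D N E" and g: "g \<in> D N E"
    show "f + g \<in> D N E"
    proof (rule D_memI)
      show "f + g \<in> polyR N" using f g D_polyR polyR_add by blast
      fix e assume "e \<in> Poly_Mapping.keys (f + g)"
      then have "e \<in> Poly_Mapping.keys f \<or> e \<in> Poly_Mapping.keys g" using keys_add[of f g] by blast
      then show "\<exists>s\<in>E. dle s e" using D_memD f g by blast
    qed
  qed
  have 4: "\<forall>r\<in>polyR N. \<forall>f\<in>D N E. r * f \<in> (D N E :: 'k mpoly set)"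
  proof (intro ballI)
    fix r f :: "'k mpoly" assume r: "r \<in> polyR N" and f: "f \<in> D N E"
    show "r * f \<in> D N E"
    proof (rule D_memI)
      show "r * f \<in> polyR N" using r f D_polyR polyR_mult by blast
      fix e assume "e \<in> Poly_Mapping.keys (r * f)"
      then obtain a b where ab: "e = a + b" "a \<in> Poly_Mapping.keys r" "b \<in> Poly_Mapping.keys f"
        using keys_mult by blast
      obtain s where "s \<in> E" "dle s b" using D_memD[OF f ab(3)] by blast
      then show "\<exists>s\<in>E. dle s e" using ab(1) dle_add2 by blast
    qed
  qed
  show ?thesis unfolding is_ideal_def using 1 2 3 4 by blast
qed

lemma D_mult: assumes "f \<in> D N E1" "g \<in> D N E2"
  shows "(f * g :: 'k::field mpoly) \<in> D N {s + t | s t. s \<in> E1 \<and> t \<in> E2}"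
proof -
  have "\<forall>e\<in>Poly_Mapping.keys (f * g). \<exists>s\<in>{s + t | s t. s \<in> E1 \<and> t \<in> E2}. dle s e"
  proof
    fix e assume "e \<in> Poly_Mapping.keys (f * g)"
    then obtain a b where ab: "e = a + b" "a \<in> Poly_Mapping.keys f" "b \<in> Poly_Mapping.keys g"
      using keys_mult by blast
    then obtain s t where "s \<in> E1" "t \<in> E2" "dle s a" "dle t b"
      using assms unfolding D_def by blast
    then show "\<exists>s\<in>{s + t | s t. s \<in> E1 \<and> t \<in> E2}. dle s e"
      using ab dle_add by blast
  qed
  then show ?thesis using assms polyR_mult unfolding D_def by blast
qed

lemma monomial_in_D: "(monomial e :: 'k::field mpoly) \<in> D N E \<Longrightarrow> \<exists>s\<in>E. dle s e"
  unfolding D_def monomial_def by simp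

lemma monomial_D_intro: "Poly_Mapping.keys e \<subseteq> {..<N} \<Longrightarrow> s \<in> E \<Longrightarrow> dle s e \<Longrightarrow> (monomial e :: 'k::field mpoly) \<in> D N E"
  unfolding D_def monomial_def polyR_def by auto

lemma monomials_polyR: "monomials N \<subseteq> (polyR N :: 'k::field mpoly set)"
  unfolding monomials_def polyR_def monomial_def by auto

lemma gen_sub_D:
  assumes "S \<subseteq> monomials N"
  shows "ideal_gen N S \<subseteq> (D N {e. Poly_Mapping.keys e \<subseteq> {..<N} \<and> (monomial e :: 'k::field mpoly) \<in> S} :: 'k mpoly set)"
proof (rule ideal_gen_least[OF D_ideal])
  show "S \<subseteq> D N {e. Poly_Mapping.keys e \<subseteq> {..<N} \<and> (monomial e :: 'k::field mpoly) \<in> S}"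
  proof
    fix x assume x: "x \<in> S"
    then obtain e where e: "x = monomial e" "Poly_Mapping.keys e \<subseteq> {..<N}" using assms unfolding monomials_def by blast
    show "x \<in> D N {e. Poly_Mapping.keys e \<subseteq> {..<N} \<and> (monomial e :: 'k::field mpoly) \<in> S}"
      unfolding e(1) by (rule monomial_D_intro[OF e(2)]) (use e x in \<open>auto simp: dle_def\<close>)
  qed
qed

lemma var_pow: "(var i :: 'k::field mpoly) ^ k = monomial (Poly_Mapping.single i k)"
  by (induct k) (auto simp: var_def monomial_def mult_single single_add[symmetric] add.commute)

lemma mono_mult: "(monomial a :: 'k::field mpoly) * monomial b = monomial (a + b)"
  unfolding monomial_def by (simp add: mult_single)

lemma one_ideal: assumes "is_ideal N A" "1 \<in> A" shows "A = polyR N"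
proof
  show "A \<subseteq> polyR N" using assms unfolding is_ideal_def by blast
  show "polyR N \<subseteq> A" using assms unfolding is_ideal_def by (metis mult.right_neutral subsetI)
qed

lemma monomial_inj: "(monomial e :: 'k::field mpoly) = monomial e' \<Longrightarrow> e = e'"
proof -
  assume "(monomial e :: 'k::field mpoly) = monomial e'"
  then have "Poly_Mapping.keys (monomial e :: 'k::field mpoly) = Poly_Mapping.keys (monomial e' :: 'k mpoly)" by simp
  then show ?thesis unfolding monomial_def by simp
qed

lemma mult_sub_D:
  assumes "A \<subseteq> (D N EA :: 'k::field mpoly set)" "B \<subseteq> D N EB"
  shows "ideal_mult N A B \<subseteq> D N {s + t | s t. s \<in> EA \<and> t \<in> EB}"
  unfolding ideal_mult_def
proof (rule ideal_gen_least[OF D_ideal], rule subsetI)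
  fix x assume "x \<in> {f * g |f g. f \<in> A \<and> g \<in> B}"
  then obtain f g where "x = f * g" "f \<in> A" "g \<in> B" by blast
  then show "x \<in> D N {s + t | s t. s \<in> EA \<and> t \<in> EB}"
    using D_mult[of f N EA g EB] assms by blast
qed

lemma mult_mem: "f \<in> A \<Longrightarrow> g \<in> B \<Longrightarrow> (f * g :: 'k::field mpoly) \<in> ideal_mult N A B"
proof -
  assume "f \<in> A" "g \<in> B"
  then have "f * g \<in> {f * g |f g. f \<in> A \<and> g \<in> B}" by blast
  then show ?thesis unfolding ideal_mult_def using ideal_gen_sup[of "{f * g |f g. f \<in> A \<and> g \<in> B}" N] by blast
qed

lemma not_one_gen:
  assumes "S \<subseteq> monomials N" "ideal_gen N S \<noteq> polyR N"
  shows "(monomial 0 :: 'k::field mpoly) \<notin> S"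
proof
  assume "(monomial 0 :: 'k::field mpoly) \<in> S"
  moreover have "(monomial 0 :: 'k mpoly) = 1" unfolding monomial_def by simp
  ultimately have one: "(1 :: 'k mpoly) \<in> ideal_gen N S" using ideal_gen_sup[of S N] by auto
  have "S \<subseteq> polyR N" using assms(1) monomials_polyR by blast
  then have "is_ideal N (ideal_gen N S)" by (rule ideal_gen_ideal)
  then have "ideal_gen N S = polyR N" using one by (rule one_ideal)
  then show False using assms(2) by simp
qed

lemma dle_single_split:
  assumes "dle (a + b) (Poly_Mapping.single j k)" "b \<noteq> 0"
  shows "Poly_Mapping.lookup a j < k" "\<And>i. i \<noteq> j \<Longrightarrow> Poly_Mapping.lookup a i = 0"
    "\<And>i. i \<noteq> j \<Longrightarrow> Poly_Mapping.lookup b i = 0"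
proof -
  have le: "\<And>i. Poly_Mapping.lookup a i + Poly_Mapping.lookup b i \<le> Poly_Mapping.lookup (Poly_Mapping.single j k) i"
    using assms(1) unfolding dle_def by (simp add: lookup_add)
  have z: "\<And>i. i \<noteq> j \<Longrightarrow> Poly_Mapping.lookup a i = 0 \<and> Poly_Mapping.lookup b i = 0"
  proof -
    fix i assume "i \<noteq> j"
    then have "Poly_Mapping.lookup (Poly_Mapping.single j k) i = 0" by (simp add: lookup_single_not_eq)
    then show "Poly_Mapping.lookup a i = 0 \<and> Poly_Mapping.lookup b i = 0" using le[of i] by simp
  qed
  then show "\<And>i. i \<noteq> j \<Longrightarrow> Poly_Mapping.lookup a i = 0" "\<And>i. i \<noteq> j \<Longrightarrow> Poly_Mapping.lookup b i = 0"
    by auto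
  have "\<exists>i. Poly_Mapping.lookup b i \<noteq> 0"
  proof (rule ccontr)
    assume "\<not> (\<exists>i. Poly_Mapping.lookup b i \<noteq> 0)"
    then have "b = 0" by (intro poly_mapping_eqI) simp
    then show False using assms(2) by simp
  qed
  then obtain i where i: "Poly_Mapping.lookup b i \<noteq> 0" by blast
  then have "i = j" using z[of i] by (cases "i = j") auto
  then show "Poly_Mapping.lookup a j < k" using le[of j] i by simp
qed

theorem theorem4p9:
  fixes N m n :: nat
  assumes "N \<ge> 2" and "m > 0" and "n > 0"
  shows "is_atom_Mon N (ideal_gen N {(var 0 :: 'k::field mpoly) ^ m, var 1 ^ n})"
proof -
  define eX where "eX = Poly_Mapping.single (0::nat) m"
  define eY where "eY = Poly_Mapping.single (1::nat) n"
  define S where "S = {(monomial eX :: 'k mpoly), monomial eY}"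
  have Seq: "{(var 0 :: 'k::field mpoly) ^ m, var 1 ^ n} = S"
    unfolding S_def eX_def eY_def by (simp add: var_pow)
  define I where "I = ideal_gen N S"
  have Smon: "S \<subseteq> monomials N"
    unfolding S_def monomials_def eX_def eY_def using assms by auto
  have ID: "I \<subseteq> D N {e. Poly_Mapping.keys e \<subseteq> {..<N} \<and> (monomial e :: 'k::field mpoly) \<in> S}"
    unfolding I_def by (rule gen_sub_D[OF Smon])
  have Ik: "\<And>f e. f \<in> I \<Longrightarrow> e \<in> Poly_Mapping.keys f \<Longrightarrow> dle eX e \<or> dle eY e"
  proof -
    fix f e assume "f \<in> I" "e \<in> Poly_Mapping.keys f"
    then obtain s where "s \<in> {e. Poly_Mapping.keys e \<subseteq> {..<N} \<and> (monomial e :: 'k::field mpoly) \<in> S}" "dle s e"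
      using ID unfolding D_def by blast
    then show "dle eX e \<or> dle eY e" unfolding S_def by (auto dest: monomial_inj)
  qed
  have inI: "(monomial eX :: 'k mpoly) \<in> I" unfolding I_def S_def using ideal_gen_sup by blast
  have Imon: "I \<in> Mon N" unfolding Mon_def
  proof (intro CollectI exI conjI)
    show "S \<subseteq> monomials N" by (fact Smon)
    show "I = ideal_gen N S" by (fact I_def)
    show "I \<noteq> {0}"
    proof
      assume "I = {0}"
      then have "(monomial eX :: 'k mpoly) = 0" using inI by blast
      then have "Poly_Mapping.keys (monomial eX :: 'k mpoly) = {}" by simp
      then show False unfolding monomial_def by simp
    qed
  qed
  have Iprop: "I \<noteq> polyR N"
  proof
    assume "I = polyR N"
    then have "(1 :: 'k mpoly) \<in> I" unfolding polyR_def by simp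
    then have "dle eX 0 \<or> dle eY 0" using Ik[of 1 0] by simp
    then show False
    proof
      assume "dle eX 0"
      then have "Poly_Mapping.lookup eX 0 \<le> Poly_Mapping.lookup (0 :: nat \<Rightarrow>\<^sub>0 nat) 0" unfolding dle_def by blast
      then show False using assms unfolding eX_def by simp
    next
      assume "dle eY 0"
      then have "Poly_Mapping.lookup eY 1 \<le> Poly_Mapping.lookup (0 :: nat \<Rightarrow>\<^sub>0 nat) 1" unfolding dle_def by blast
      then show False using assms unfolding eY_def by simp
    qed
  qed
  have noprod: "\<not> (\<exists>A \<in> Mon N - {polyR N}. \<exists>B \<in> Mon N - {polyR N}. I = ideal_mult N A B)"
  proof
    assume "\<exists>A \<in> Mon N - {polyR N}. \<exists>B \<in> Mon N - {polyR N}. I = ideal_mult N A B"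
    then obtain A B where A: "A \<in> Mon N" "A \<noteq> polyR N" and B: "B \<in> Mon N" "B \<noteq> polyR N"
      and IAB: "I = ideal_mult N A B" by blast
    obtain SA where SA: "SA \<subseteq> monomials N" "A = ideal_gen N SA" using A unfolding Mon_def by blast
    obtain SB where SB: "SB \<subseteq> monomials N" "B = ideal_gen N SB" using B unfolding Mon_def by blast
    define EA where "EA = {e. Poly_Mapping.keys e \<subseteq> {..<N} \<and> (monomial e :: 'k::field mpoly) \<in> SA}"
    define EB where "EB = {e. Poly_Mapping.keys e \<subseteq> {..<N} \<and> (monomial e :: 'k::field mpoly) \<in> SB}"
    have AD: "A \<subseteq> D N EA" unfolding EA_def SA(2) by (rule gen_sub_D[OF SA(1)])
    have BD: "B \<subseteq> D N EB" unfolding EB_def SB(2) by (rule gen_sub_D[OF SB(1)])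
    have AB: "I \<subseteq> D N {s + t | s t. s \<in> EA \<and> t \<in> EB}" unfolding IAB by (rule mult_sub_D[OF AD BD])
    have nA: "0 \<notin> EA" using not_one_gen[OF SA(1)] SA(2) A(2) unfolding EA_def by blast
    have nB: "0 \<notin> EB" using not_one_gen[OF SB(1)] SB(2) B(2) unfolding EB_def by blast
    have "(monomial eX :: 'k mpoly) \<in> D N {s + t | s t. s \<in> EA \<and> t \<in> EB}" using AB inI by blast
    then obtain sa sb where sab: "sa \<in> EA" "sb \<in> EB" "dle (sa + sb) eX"
      using monomial_in_D by blast
    have inY: "(monomial eY :: 'k mpoly) \<in> I" unfolding I_def S_def using ideal_gen_sup by blast
    have "(monomial eY :: 'k mpoly) \<in> D N {s + t | s t. s \<in> EA \<and> t \<in> EB}" using AB inY by blast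
    then obtain ta tb where tab: "ta \<in> EA" "tb \<in> EB" "dle (ta + tb) eY"
      using monomial_in_D by blast
    have sb0: "sb \<noteq> 0" using sab nB by blast
    have ta0: "ta \<noteq> 0" using tab nA by blast
    have s1: "Poly_Mapping.lookup sa 0 < m" "Poly_Mapping.lookup sa 1 = 0"
      using dle_single_split[OF sab(3)[unfolded eX_def] sb0] by auto
    have t1: "Poly_Mapping.lookup tb 1 < n" "Poly_Mapping.lookup tb 0 = 0"
      using dle_single_split[OF tab(3)[unfolded eY_def, unfolded add.commute[of ta]] ta0] by auto
    have "monomial sa \<in> A" using sab(1) SA(2) ideal_gen_sup unfolding EA_def by blast
    moreover have "monomial tb \<in> B" using tab(2) SB(2) ideal_gen_sup unfolding EB_def by blast
    ultimately have "(monomial sa :: 'k mpoly) * monomial tb \<in> I" unfolding IAB by (rule mult_mem)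
    then have "(monomial (sa + tb) :: 'k mpoly) \<in> I" by (simp add: mono_mult)
    then have "dle eX (sa + tb) \<or> dle eY (sa + tb)" using Ik[of "monomial (sa + tb)" "sa + tb"]
      unfolding monomial_def by simp
    then show False
    proof
      assume "dle eX (sa + tb)"
      then have "m \<le> Poly_Mapping.lookup sa 0 + Poly_Mapping.lookup tb 0" unfolding dle_def eX_def
        by (metis Poly_Mapping.lookup_add Poly_Mapping.lookup_single_eq)
      then show False using s1 t1 by simp
    next
      assume "dle eY (sa + tb)"
      then have "n \<le> Poly_Mapping.lookup sa 1 + Poly_Mapping.lookup tb 1" unfolding dle_def eY_def
        by (metis Poly_Mapping.lookup_add Poly_Mapping.lookup_single_eq)
      then show False using s1 t1 by simp
    qed
  qed
  show ?thesis unfolding is_atom_Mon_def Seq I_def[symmetric] using Imon Iprop noprod by blast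
qed

end
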